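(* Let $X$ be a compactum, $Y$ a compactum in the Hilbert cube $I^\infty$, and $Y_1\supset Y_2\supset\cdots$ compact prism neighbourhoods of $Y$ with $\bigcap_kY_k=Y$ and inclusions $p_k:Y_{k+1}\to Y_k$. Let $T_{X,Y}$ be the rooted simplicial tree of the inverse sequence of sets $([X,Y_k],p_k^* )_{k\ge1}$, where $p_k^*[g]=[p_k\circ g]$. Then there is a bijection between the homotopy classes of approximative maps from $X$ towards $Y$ and the geodesically complete branches of $T_{X,Y}$.
   Context: A compactum is a compact metric space; a prism is a space homeomorphic to $P\times I^\infty$ with $P$ a compact polyhedron. $[X,Y_k]$ is the set of homotopy classes of continuous maps $X\to Y_k$. For an inverse sequence of sets $(S_n,r_n)$, $r_n:S_{n+1}\to S_n$, its tree is the geometric realization of the graph with vertices $\{v\}\sqcup\bigsqcup_nS_n$ and edges $\{x,r_n(x)\}$ ($x\in S_{n+1}$), $\{x,v\}$ ($x\in S_1$), edges of length 1, path metric, rooted at $v$. A geodesically complete branch is an isometric embedding $F:[0,\infty)\to T_{X,Y}$ with $F(0)=v$. An approximative map of $X$ towards $Y$ is a sequence of continuous maps $f_k:X\to Y_k$ such that for every $N$ there is $m(N)$ with $p_t\circ f_{t+1}\simeq f_t$ in $Y_N$ for all $t\ge m(N)$; two approximative maps $\{f_k\},\{g_k\}$ are homotopic if for every neighbourhood $V$ of $Y$ in $I^\infty$ there is $k_0$ with $f_k\simeq g_k$ in $V$ for all $k\ge k_0$. *)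

theory Defs
  imports "HOL-Analysis.Analysis" "HOL-Library.FuncSet"
begin

abbreviation RN :: "(nat \<Rightarrow> real) topology" where
  "RN \<equiv> powertop_real UNIV"

definition hilbert_cube_set :: "(nat \<Rightarrow> real) set" where
  "hilbert_cube_set = {x. \<forall>i. x i \<in> {0..1}}"

definition hilbert_cube :: "(nat \<Rightarrow> real) topology" where
  "hilbert_cube = subtopology RN hilbert_cube_set"

text \<open>Convex hull of a finite set of points of the vector space of real sequences,
  written out explicitly (the function type carries no real-vector instance).\<close>
definition seq_convex_hull :: "(nat \<Rightarrow> real) set \<Rightarrow> (nat \<Rightarrow> real) set" where
  "seq_convex_hull V = {(\<lambda>i. \<Sum>v\<in>V. u v * v i) | u.
      (\<forall>v\<in>V. 0 \<le> u v) \<and> (\<Sum>v\<in>V. u v) = 1}"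

definition compact_polyhedron :: "(nat \<Rightarrow> real) set \<Rightarrow> bool" where
  "compact_polyhedron P \<longleftrightarrow>
     (\<exists>\<F>. finite \<F> \<and> (\<forall>V\<in>\<F>. finite V) \<and> P = (\<Union>V\<in>\<F>. seq_convex_hull V))"

definition prism :: "'a topology \<Rightarrow> bool" where
  "prism T \<longleftrightarrow> (\<exists>P. compact_polyhedron P \<and>
      T homeomorphic_space prod_topology (subtopology RN P) hilbert_cube)"

definition hclass :: "'a topology \<Rightarrow> 'b topology \<Rightarrow> ('a \<Rightarrow> 'b) \<Rightarrow> ('a \<Rightarrow> 'b) set" where
  "hclass A B f = {g. homotopic_with (\<lambda>_. True) A B f g}"

definition hclasses :: "'a topology \<Rightarrow> 'b topology \<Rightarrow> ('a \<Rightarrow> 'b) set set" where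
  "hclasses A B = {hclass A B f | f. continuous_map A B f}"

text \<open>An inverse sequence of sets is given by \<open>S :: nat \<Rightarrow> 'b set\<close> and bonding maps
  \<open>r n : S (Suc n) \<rightarrow> S n\<close>. Level \<open>S n\<close> consists of the vertices at depth \<open>n+1\<close>;
  the root \<open>v\<close> has depth 0 and is joined to every vertex of \<open>S 0\<close>.

  A point of the geometric realization is either the root, or a point
  \<open>Pt n x t\<close> with \<open>x \<in> S n\<close>, \<open>0 \<le> t < 1\<close>: the point at distance \<open>t\<close> from the vertex
  \<open>x\<close> on the (unit length) edge from \<open>x\<close> to its parent.\<close>
datatype 'b tree_pt = Root | Pt nat 'b real

definition tree_points :: "(nat \<Rightarrow> 'b set) \<Rightarrow> 'b tree_pt set" where
  "tree_points S = insert Root {Pt n x t | n x t. x \<in> S n \<and> 0 \<le> t \<and> t < 1}"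

fun anc :: "(nat \<Rightarrow> 'b \<Rightarrow> 'b) \<Rightarrow> nat \<Rightarrow> nat \<Rightarrow> 'b \<Rightarrow> 'b" where
  "anc r 0 k x = x"
| "anc r (Suc n) k x = (if Suc n \<le> k then x else anc r n k (r n x))"

fun tree_height :: "'b tree_pt \<Rightarrow> real" where
  "tree_height Root = 0"
| "tree_height (Pt n x t) = real n + 1 - t"

text \<open>Depth of the deepest common ancestor vertex (the root having depth 0).\<close>
fun tree_meet_depth :: "(nat \<Rightarrow> 'b \<Rightarrow> 'b) \<Rightarrow> 'b tree_pt \<Rightarrow> 'b tree_pt \<Rightarrow> nat" where
  "tree_meet_depth r (Pt n x t) (Pt m y s) =
     Max (insert 0 {Suc k | k. k \<le> min n m \<and> anc r n k x = anc r m k y})"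
| "tree_meet_depth r _ _ = 0"

text \<open>The path metric of the tree with unit edge lengths:
  \<open>d(p,q) = h(p) + h(q) - 2 h(p \<and> q)\<close>, where \<open>p \<and> q\<close> is the meeting point of the geodesics
  from the root to \<open>p\<close> and to \<open>q\<close>.\<close>
definition tree_dist :: "(nat \<Rightarrow> 'b \<Rightarrow> 'b) \<Rightarrow> 'b tree_pt \<Rightarrow> 'b tree_pt \<Rightarrow> real" where
  "tree_dist r p q = tree_height p + tree_height q
      - 2 * min (real (tree_meet_depth r p q)) (min (tree_height p) (tree_height q))"

text \<open>Geodesically complete branches: isometric embeddings \<open>[0,\<infinity>) \<rightarrow> T\<close> sending 0 to
  the root (taken extensional, i.e. undefined outside \<open>[0,\<infinity>)\<close>).\<close>
definition geodesic_branches ::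
    "(nat \<Rightarrow> 'b set) \<Rightarrow> (nat \<Rightarrow> 'b \<Rightarrow> 'b) \<Rightarrow> (real \<Rightarrow> 'b tree_pt) set" where
  "geodesic_branches S r = {F. F \<in> {0..} \<rightarrow>\<^sub>E tree_points S \<and> F 0 = Root \<and>
      (\<forall>a\<in>{0..}. \<forall>b\<in>{0..}. tree_dist r (F a) (F b) = \<bar>a - b\<bar>)}"

text \<open>\<open>p\<^sub>k\<^sup>*\<close>: induced by the inclusion \<open>Y (Suc k) \<subseteq> Y k\<close>.\<close>
definition induced_incl ::
    "'a topology \<Rightarrow> (nat \<Rightarrow> (nat \<Rightarrow> real) set) \<Rightarrow> nat
       \<Rightarrow> ('a \<Rightarrow> nat \<Rightarrow> real) set \<Rightarrow> ('a \<Rightarrow> nat \<Rightarrow> real) set" where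
  "induced_incl TX Y k C = hclass TX (subtopology hilbert_cube (Y k)) (SOME g. g \<in> C)"

definition approximative_map ::
    "'a topology \<Rightarrow> (nat \<Rightarrow> (nat \<Rightarrow> real) set) \<Rightarrow> (nat \<Rightarrow> 'a \<Rightarrow> nat \<Rightarrow> real) \<Rightarrow> bool" where
  "approximative_map TX Y f \<longleftrightarrow>
     (\<forall>k. continuous_map TX (subtopology hilbert_cube (Y k)) (f k)) \<and>
     (\<forall>N. \<exists>m. \<forall>t\<ge>m. homotopic_with (\<lambda>_. True) TX (subtopology hilbert_cube (Y N))
                       (f (Suc t)) (f t))"

definition approx_homotopic ::
    "'a topology \<Rightarrow> (nat \<Rightarrow> real) set
       \<Rightarrow> (nat \<Rightarrow> 'a \<Rightarrow> nat \<Rightarrow> real) \<Rightarrow> (nat \<Rightarrow> 'a \<Rightarrow> nat \<Rightarrow> real) \<Rightarrow> bool" where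
  "approx_homotopic TX Y0 f g \<longleftrightarrow>
     (\<forall>V. V \<subseteq> hilbert_cube_set \<and> Y0 \<subseteq> hilbert_cube interior_of V \<longrightarrow>
        (\<exists>k0. \<forall>k\<ge>k0. homotopic_with (\<lambda>_. True) TX (subtopology hilbert_cube V) (f k) (g k)))"

end

theory Submission
  imports Defs
begin


lemma hclass_mem: "g \<in> hclass A B f \<longleftrightarrow> homotopic_with (\<lambda>_. True) A B f g"
  by (simp add: hclass_def)

lemma hclass_eq:
  assumes "continuous_map A B f"
  shows "hclass A B f = hclass A B g \<longleftrightarrow> homotopic_with (\<lambda>_. True) A B f g"
proof
  assume e: "hclass A B f = hclass A B g"
  have "f \<in> hclass A B f" using assms by (simp add: hclass_def)
  then have "f \<in> hclass A B g" using e by simp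
  then have "homotopic_with (\<lambda>_. True) A B g f" by (simp add: hclass_def)
  then show "homotopic_with (\<lambda>_. True) A B f g"
    by (rule homotopic_with_symD)
next
  assume h: "homotopic_with (\<lambda>_. True) A B f g"
  have h': "homotopic_with (\<lambda>_. True) A B g f" using h by (rule homotopic_with_symD)
  show "hclass A B f = hclass A B g"
  proof (rule set_eqI)
    fix x
    show "x \<in> hclass A B f \<longleftrightarrow> x \<in> hclass A B g"
    proof
      assume "x \<in> hclass A B f"
      then have "homotopic_with (\<lambda>_. True) A B f x" by (simp add: hclass_def)
      then have "homotopic_with (\<lambda>_. True) A B g x" by (rule homotopic_with_trans[OF h'])
      then show "x \<in> hclass A B g" by (simp add: hclass_def)
    next
      assume "x \<in> hclass A B g"
      then have "homotopic_with (\<lambda>_. True) A B g x" by (simp add: hclass_def)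
      then have "homotopic_with (\<lambda>_. True) A B f x" by (rule homotopic_with_trans[OF h])
      then show "x \<in> hclass A B f" by (simp add: hclass_def)
    qed
  qed
qed

lemma cont_mono:
  assumes "continuous_map X (subtopology Z S) f" "S \<subseteq> T"
  shows "continuous_map X (subtopology Z T) f"
proof -
  have "continuous_map X Z f" "f \<in> topspace X \<rightarrow> S"
    using assms(1) unfolding continuous_map_in_subtopology by simp_all
  moreover have "f \<in> topspace X \<rightarrow> T" using calculation(2) assms(2) by (simp add: Pi_iff subset_iff)
  ultimately show ?thesis unfolding continuous_map_in_subtopology by simp
qed

lemma hom_mono:
  assumes "homotopic_with P X (subtopology Z S) f g" "S \<subseteq> T"
  shows "homotopic_with P X (subtopology Z T) f g"
proof -
  obtain h where h: "continuous_map (prod_topology (top_of_set {0..1::real}) X) (subtopology Z S) h"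
     "\<forall>x. h (0, x) = f x" "\<forall>x. h (1, x) = g x" "\<forall>t\<in>{0..1}. P (\<lambda>x. h (t, x))"
    using assms(1) unfolding homotopic_with_def by blast
  have "continuous_map (prod_topology (top_of_set {0..1::real}) X) (subtopology Z T) h"
    using cont_mono[OF h(1) assms(2)] .
  then show ?thesis unfolding homotopic_with_def using h(2-4) by blast
qed

lemma Hausdorff_hilbert: "Hausdorff_space hilbert_cube"
  unfolding hilbert_cube_def
  by (rule Hausdorff_space_subtopology)
     (metis Hausdorff_space_euclidean Hausdorff_space_product_topology)

lemma eventually_inside:
  assumes cpt: "\<And>k. compactin hilbert_cube (Y k)"
    and dec: "\<And>k. Y (Suc k) \<subseteq> Y k"
    and int: "(\<Inter>k. Y k) = Y0"
    and sub: "Y0 \<subseteq> hilbert_cube interior_of V"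
  shows "\<exists>N. \<forall>n\<ge>N. Y n \<subseteq> V"
proof -
  have ds: "decseq Y" using dec by (simp add: decseq_Suc_iff)
  let ?U = "hilbert_cube interior_of V"
  let ?g = "\<lambda>k. topspace hilbert_cube - Y k"
  have cl: "closedin hilbert_cube (Y k)" for k
    by (rule compactin_imp_closedin[OF Hausdorff_hilbert cpt])
  have op: "\<forall>U \<in> insert ?U (range ?g). openin hilbert_cube U"
    using cl by (auto simp: closedin_def)
  have cov: "Y 0 \<subseteq> \<Union>(insert ?U (range ?g))"
  proof
    fix x assume x: "x \<in> Y 0"
    then have xt: "x \<in> topspace hilbert_cube" using compactin_subset_topspace[OF cpt] by blast
    show "x \<in> \<Union>(insert ?U (range ?g))"
    proof (cases "x \<in> Y0")
      case True then show ?thesis using sub by blast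
    next
      case False then obtain k where "x \<notin> Y k" using int by blast
      then show ?thesis using xt by blast
    qed
  qed
  have C: "\<forall>\<U>. (\<forall>U\<in>\<U>. openin hilbert_cube U) \<and> Y 0 \<subseteq> \<Union>\<U> \<longrightarrow> (\<exists>\<F>. finite \<F> \<and> \<F> \<subseteq> \<U> \<and> Y 0 \<subseteq> \<Union>\<F>)"
    using cpt[of 0] unfolding compactin_def by blast
  have "\<exists>\<F>. finite \<F> \<and> \<F> \<subseteq> insert ?U (range ?g) \<and> Y 0 \<subseteq> \<Union>\<F>"
    using C op cov by blast
  then obtain F where F: "finite F" "F \<subseteq> insert ?U (range ?g)" "Y 0 \<subseteq> \<Union>F"
    by blast
  have fd: "finite (F - {?U})" using F(1) by simp
  have "F - {?U} \<subseteq> ?g ` UNIV" using F(2) by blast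
  then have "\<exists>C\<subseteq>UNIV. finite C \<and> F - {?U} = ?g ` C" by (rule finite_subset_image[OF fd])
  then obtain K where K: "finite K" "F - {?U} = ?g ` K" by blast
  define N where "N = Max (insert 0 K)"
  have "Y n \<subseteq> V" if "n \<ge> N" for n
  proof
    fix x assume x: "x \<in> Y n"
    have kK: "Y n \<subseteq> Y k" if "k \<in> K" for k
    proof -
      have "k \<le> N" unfolding N_def using K(1) that by simp
      then have "k \<le> n" using \<open>n \<ge> N\<close> by simp
      then show ?thesis by (rule decseqD[OF ds])
    qed
    have "Y n \<subseteq> Y 0" by (rule decseqD[OF ds]) simp
    then have "x \<in> Y 0" using x by blast
    then obtain W where W: "W \<in> F" "x \<in> W" using F by blast
    show "x \<in> V"
    proof (cases "W = ?U")
      case True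
      then have "W \<subseteq> V" using interior_of_subset[of hilbert_cube V] by simp
      then show ?thesis using W(2) by (rule subsetD)
    next
      case False
      then have "W \<in> ?g ` K" using W K by blast
      then obtain k where "k \<in> K" "W = ?g k" by blast
      then show ?thesis using W x kK[OF \<open>k \<in> K\<close>] by blast
    qed
  qed
  then show ?thesis by blast
qed



abbreviation HT where "HT TX Y k f g \<equiv> homotopic_with (\<lambda>_. True) TX (subtopology hilbert_cube (Y k)) f g"
abbreviation CT where "CT TX Y k f \<equiv> continuous_map TX (subtopology hilbert_cube (Y k)) f"
abbreviation HC where "HC TX Y k f \<equiv> hclass TX (subtopology hilbert_cube (Y k)) f"

definition Mx where "Mx TX Y f N = max N (SOME m. \<forall>t\<ge>m. HT TX Y N (f (Suc t)) (f t))"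
definition theta where "theta TX Y f N = HC TX Y N (f (Mx TX Y f N))"
definition Thr where "Thr TX Y = {c. \<forall>n. c n \<in> hclasses TX (subtopology hilbert_cube (Y n)) \<and>
   induced_incl TX Y n (c (Suc n)) = c n}"

lemma monoY:
  assumes "\<And>k. Y (Suc k) \<subseteq> Y k" "m \<le> n" shows "Y n \<subseteq> Y m"
  using assms lift_Suc_antimono_le[of Y] by blast

lemma Mx_ge: "N \<le> Mx TX Y f N" by (simp add: Mx_def)

context
  fixes TX :: "'a topology" and Y :: "nat \<Rightarrow> (nat \<Rightarrow> real) set"
  assumes dec: "\<And>k. Y (Suc k) \<subseteq> Y k"
begin

lemma approx_cont:
  assumes "approximative_map TX Y f" "N \<le> t" shows "CT TX Y N (f t)"
  using assms cont_mono monoY[of Y, OF dec] unfolding approximative_map_def by blast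


lemma Mx_step:
  assumes "approximative_map TX Y f" "Mx TX Y f N \<le> t"
  shows "HT TX Y N (f (Suc t)) (f t)"
proof -
  have "\<exists>m. \<forall>t\<ge>m. HT TX Y N (f (Suc t)) (f t)" using assms(1) by (simp add: approximative_map_def)
  then have "\<forall>t\<ge>(SOME m. \<forall>t\<ge>m. HT TX Y N (f (Suc t)) (f t)). HT TX Y N (f (Suc t)) (f t)"
    by (rule someI_ex)
  then show ?thesis using assms(2) by (simp add: Mx_def)
qed

lemma stable:
  assumes "approximative_map TX Y f" "Mx TX Y f N \<le> t"
  shows "HC TX Y N (f t) = theta TX Y f N"
  using assms(2)
proof (induction t rule: dec_induct)
  case base then show ?case by (simp add: theta_def)
next
  case (step t)
  have "CT TX Y N (f (Suc t))" using approx_cont[OF assms(1)] Mx_ge[where N=N and f=f and TX=TX and Y=Y] step(1) by simp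
  then have "HC TX Y N (f (Suc t)) = HC TX Y N (f t)"
    using hclass_eq Mx_step[OF assms(1) step(1)] by blast
  then show ?case using step by simp
qed

lemma theta_thr:
  assumes f: "approximative_map TX Y f"
  shows "theta TX Y f \<in> Thr TX Y"
  unfolding Thr_def
proof (intro CollectI allI conjI)
  fix n
  show "theta TX Y f n \<in> hclasses TX (subtopology hilbert_cube (Y n))"
    unfolding theta_def hclasses_def using approx_cont[OF f Mx_ge] by blast
  define k where "k = max (Mx TX Y f n) (Mx TX Y f (Suc n))"
  have k1: "Mx TX Y f n \<le> k" "Mx TX Y f (Suc n) \<le> k" by (auto simp: k_def)
  have ck: "CT TX Y (Suc n) (f k)" using approx_cont[OF f] Mx_ge[where N="Suc n" and f=f and TX=TX and Y=Y] k1 by simp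
  have e1: "theta TX Y f (Suc n) = HC TX Y (Suc n) (f k)" using stable[OF f k1(2)] by simp
  define g where "g = (SOME g. g \<in> HC TX Y (Suc n) (f k))"
  have "f k \<in> HC TX Y (Suc n) (f k)" using ck by (simp add: hclass_def)
  then have "g \<in> HC TX Y (Suc n) (f k)" unfolding g_def by (rule someI[where P="\<lambda>g. g \<in> HC TX Y (Suc n) (f k)"])
  then have "HT TX Y (Suc n) (f k) g" by (simp add: hclass_def)
  then have hg: "HT TX Y n (f k) g" using hom_mono dec by blast
  have ckn: "CT TX Y n (f k)" using homotopic_with_imp_continuous_maps[OF hg] by simp
  have "induced_incl TX Y n (theta TX Y f (Suc n)) = HC TX Y n g"
    unfolding induced_incl_def e1 g_def by simp
  also have "\<dots> = HC TX Y n (f k)"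
  proof -
    have "HC TX Y n (f k) = HC TX Y n g" using hclass_eq[OF ckn] hg by simp
    then show ?thesis by simp
  qed
  also have "\<dots> = theta TX Y f n" using stable[OF f k1(1)] .
  finally show "induced_incl TX Y n (theta TX Y f (Suc n)) = theta TX Y f n" .
qed

lemma thr_surj:
  assumes c: "c \<in> Thr TX Y"
  shows "\<exists>f. approximative_map TX Y f \<and> theta TX Y f = c"
proof -
  define f where "f n = (SOME g. CT TX Y n g \<and> c n = HC TX Y n g)" for n
  have f: "CT TX Y n (f n) \<and> c n = HC TX Y n (f n)" for n
  proof -
    have "c n \<in> hclasses TX (subtopology hilbert_cube (Y n))" using c by (simp add: Thr_def)
    then have "\<exists>g. CT TX Y n g \<and> c n = HC TX Y n g" by (auto simp: hclasses_def)
    then show ?thesis unfolding f_def by (rule someI_ex)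
  qed
  have step: "HT TX Y t (f (Suc t)) (f t)" for t
  proof -
    define g where "g = (SOME g. g \<in> c (Suc t))"
    have "f (Suc t) \<in> c (Suc t)" using f[of "Suc t"] by (simp add: hclass_def)
    then have "g \<in> c (Suc t)" unfolding g_def by (rule someI[where P="\<lambda>g. g \<in> c (Suc t)"])
    then have h1: "HT TX Y (Suc t) (f (Suc t)) g" using f[of "Suc t"] by (simp add: hclass_def)
    then have h1': "HT TX Y t (f (Suc t)) g" using hom_mono dec by blast
    have cg: "CT TX Y t g" using homotopic_with_imp_continuous_maps[OF h1'] by simp
    have "HC TX Y t g = c t" using c unfolding Thr_def induced_incl_def g_def by simp
    also have "\<dots> = HC TX Y t (f t)" using f by simp
    finally have "HT TX Y t g (f t)" using hclass_eq[OF cg] by simp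
    then show ?thesis using h1' homotopic_with_trans by blast
  qed
  have stepN: "HT TX Y N (f (Suc t)) (f t)" if "N \<le> t" for N t
    using hom_mono[OF step monoY[of Y, OF dec that]] .
  have ap: "approximative_map TX Y f"
    unfolding approximative_map_def using f stepN by blast
  have cl: "HC TX Y N (f t) = c N" if "N \<le> t" for N t
    using that
  proof (induction t rule: dec_induct)
    case base then show ?case using f by simp
  next
    case (step t)
    have "CT TX Y N (f (Suc t))" using approx_cont[OF ap] step(1) by simp
    then have "HC TX Y N (f (Suc t)) = HC TX Y N (f t)"
      using hclass_eq stepN[OF step(1)] by blast
    then show ?case using step by simp
  qed
  have "theta TX Y f = c"
  proof
    fix N show "theta TX Y f N = c N" unfolding theta_def using cl[OF Mx_ge] .
  qed
  then show ?thesis using ap by blast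
qed

end

lemma theta_iff:
  fixes TX :: "'a topology"
  assumes dec: "\<And>k. Y (Suc k) \<subseteq> Y k"
    and cpt: "\<And>k. compactin hilbert_cube (Y k)"
    and sub: "\<And>k. Y k \<subseteq> hilbert_cube_set"
    and intY: "\<And>k. Y0 \<subseteq> hilbert_cube interior_of (Y k)"
    and int: "(\<Inter>k. Y k) = Y0"
    and f: "approximative_map TX Y f" and g: "approximative_map TX Y g"
  shows "approx_homotopic TX Y0 f g \<longleftrightarrow> theta TX Y f = theta TX Y g"
proof
  assume h: "approx_homotopic TX Y0 f g"
  show "theta TX Y f = theta TX Y g"
  proof
    fix N
    obtain k0 where k0: "\<forall>k\<ge>k0. HT TX Y N (f k) (g k)"
      using h sub intY unfolding approx_homotopic_def by blast
    define k where "k = max k0 (max (Mx TX Y f N) (Mx TX Y g N))"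
    have kk: "k0 \<le> k" "Mx TX Y f N \<le> k" "Mx TX Y g N \<le> k" by (auto simp: k_def)
    have ck: "CT TX Y N (f k)" using approx_cont[OF dec f] Mx_ge[where N=N and f=f and TX=TX and Y=Y] kk by simp
    have "theta TX Y f N = HC TX Y N (f k)" using stable[OF dec f kk(2)] by simp
    also have "\<dots> = HC TX Y N (g k)" using hclass_eq[OF ck] k0 kk by simp
    also have "\<dots> = theta TX Y g N" using stable[OF dec g kk(3)] .
    finally show "theta TX Y f N = theta TX Y g N" .
  qed
next
  assume e: "theta TX Y f = theta TX Y g"
  show "approx_homotopic TX Y0 f g"
    unfolding approx_homotopic_def
  proof (intro allI impI)
    fix V assume V: "V \<subseteq> hilbert_cube_set \<and> Y0 \<subseteq> hilbert_cube interior_of V"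
    obtain N where N: "\<forall>n\<ge>N. Y n \<subseteq> V" using eventually_inside[OF cpt dec int] V by blast
    define k0 where "k0 = max (Mx TX Y f N) (Mx TX Y g N)"
    have "HT TX Y N (f k) (g k)" if "k \<ge> k0" for k
    proof -
      have kk: "Mx TX Y f N \<le> k" "Mx TX Y g N \<le> k" using that by (auto simp: k0_def)
      have ck: "CT TX Y N (f k)" using approx_cont[OF dec f] Mx_ge[where N=N and f=f and TX=TX and Y=Y] kk by simp
      have "HC TX Y N (f k) = HC TX Y N (g k)"
        using stable[OF dec f kk(1)] stable[OF dec g kk(2)] e by simp
      then show ?thesis using hclass_eq[OF ck] by simp
    qed
    then have "\<forall>k\<ge>k0. homotopic_with (\<lambda>_. True) TX (subtopology hilbert_cube V) (f k) (g k)"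
      using hom_mono N by blast
    then show "\<exists>k0. \<forall>k\<ge>k0. homotopic_with (\<lambda>_. True) TX (subtopology hilbert_cube V) (f k) (g k)" by blast
  qed
qed



definition ThrT :: "(nat \<Rightarrow> 'b set) \<Rightarrow> (nat \<Rightarrow> 'b \<Rightarrow> 'b) \<Rightarrow> (nat \<Rightarrow> 'b) set" where
  "ThrT S r = {c. \<forall>n. c n \<in> S n \<and> r n (c (Suc n)) = c n}"

definition mk :: "(nat \<Rightarrow> 'b) \<Rightarrow> real \<Rightarrow> 'b tree_pt" where
  "mk c a = (if a < 0 then undefined else if a = 0 then Root else
     Pt (nat \<lceil>a\<rceil> - 1) (c (nat \<lceil>a\<rceil> - 1)) (real (nat \<lceil>a\<rceil>) - a))"

definition tb :: "(real \<Rightarrow> 'b tree_pt) \<Rightarrow> nat \<Rightarrow> 'b" where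
  "tb F n = (case F (real n + 1) of Pt _ y _ \<Rightarrow> y | Root \<Rightarrow> undefined)"

lemma nat_unique:
  fixes a :: real
  assumes "real n < a" "a \<le> real n + 1" "real m < a" "a \<le> real m + 1"
  shows "n = m"
  using assms by linarith

lemma mk_pos:
  assumes "a > 0"
  shows "\<exists>n. mk c a = Pt n (c n) (real n + 1 - a) \<and> real n < a \<and> a \<le> real n + 1"
proof -
  have c1: "\<lceil>a\<rceil> \<ge> 1" using assms by (simp add: one_le_ceiling)
  define n where "n = nat \<lceil>a\<rceil> - 1"
  have nn: "1 \<le> nat \<lceil>a\<rceil>" using c1 le_nat_iff[of "\<lceil>a\<rceil>" 1] by simp
  have rn0: "real n + 1 = real (nat \<lceil>a\<rceil>)" unfolding n_def using nn by (simp add: of_nat_diff)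
  have rn: "real n + 1 = real_of_int \<lceil>a\<rceil>" using rn0 c1 by simp
  have e: "real (nat \<lceil>a\<rceil>) = real n + 1" using rn c1 by simp
  have "mk c a = Pt n (c n) (real n + 1 - a)" using assms unfolding mk_def n_def[symmetric] e by simp
  moreover have "real n < a" using rn ceiling_correct[of a] by linarith
  moreover have "a \<le> real n + 1" using rn le_of_int_ceiling[of a] by linarith
  ultimately show ?thesis by blast
qed

lemma anc_self: "anc r n n x = x"
  by (cases n) auto

lemma anc_suc: "anc r (Suc n) n x = r n x"
  by (simp add: anc_self)

lemma anc_thr:
  assumes "c \<in> ThrT S r" "k \<le> n" shows "anc r n k (c n) = c k"
  using assms(2)
proof (induction n)
  case 0 then show ?case by simp
next
  case (Suc n)
  show ?case
  proof (cases "Suc n \<le> k")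
    case True then have "k = Suc n" using Suc by simp
    then show ?thesis by simp
  next
    case False
    then have "anc r (Suc n) k (c (Suc n)) = anc r n k (r n (c (Suc n)))" by simp
    also have "\<dots> = anc r n k (c n)" using assms(1) by (simp add: ThrT_def)
    also have "\<dots> = c k" using Suc False by simp
    finally show ?thesis .
  qed
qed

lemma meet_thr:
  assumes "c \<in> ThrT S r"
  shows "tree_meet_depth r (Pt n (c n) t) (Pt m (c m) s) = Suc (min n m)"
proof -
  have "{Suc k |k. k \<le> min n m \<and> anc r n k (c n) = anc r m k (c m)} = Suc ` {..min n m}"
    using anc_thr[OF assms] by auto
  moreover have "insert 0 (Suc ` {..min n m}) = {..Suc (min n m)}"
    by (rule atMost_Suc_eq_insert_0[symmetric])
  moreover have "Max {..Suc (min n m)} = Suc (min n m)" by (rule Max_eqI) auto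
  ultimately show ?thesis by simp
qed

lemma meet_anc:
  assumes "n \<le> m" "real (tree_meet_depth r (Pt n x t) (Pt m y s)) > real n"
  shows "anc r m n y = x"
proof -
  let ?B = "{Suc k |k. k \<le> min n m \<and> anc r n k x = anc r m k y}"
  have fin: "finite (insert 0 ?B)"
    by (rule finite_subset[of _ "{..Suc (min n m)}"]) auto
  have "Max (insert 0 ?B) > n" using assms(2) by simp
  then have "\<exists>a\<in>insert 0 ?B. n < a" using Max_gr_iff[OF fin insert_not_empty] by simp
  then obtain a where "a \<in> insert 0 ?B" "a > n" by blast
  then obtain k where "k \<le> min n m" "anc r n k x = anc r m k y" "Suc k > n" by auto
  then have "k = n" by simp
  then show ?thesis using \<open>anc r n k x = anc r m k y\<close> by (simp add: anc_self)
qed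

lemma dist_root: "tree_height q \<ge> 0 \<Longrightarrow> tree_dist r Root q = tree_height q"
  by (simp add: tree_dist_def)

lemma height_nonneg: "q \<in> tree_points S \<Longrightarrow> tree_height q \<ge> 0"
  by (auto simp: tree_points_def)

lemma mk_branch:
  assumes c: "c \<in> ThrT S r"
  shows "mk c \<in> geodesic_branches S r"
proof -
  have pts: "mk c a \<in> tree_points S" if "a \<ge> 0" for a
  proof (cases "a = 0")
    case True then show ?thesis by (simp add: mk_def tree_points_def)
  next
    case False
    then have "a > 0" using that by simp
    then obtain n where "mk c a = Pt n (c n) (real n + 1 - a)" "real n < a" "a \<le> real n + 1"
      using mk_pos[of a c] by blast
    then show ?thesis using c by (auto simp: tree_points_def ThrT_def)
  qed
  have h: "tree_height (mk c a) = a" if "a \<ge> 0" for a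
  proof (cases "a = 0")
    case True then show ?thesis by (simp add: mk_def)
  next
    case False
    then have "a > 0" using that by simp
    then obtain n where "mk c a = Pt n (c n) (real n + 1 - a)"
      using mk_pos[of a c] by blast
    then show ?thesis by simp
  qed
  have d: "tree_dist r (mk c a) (mk c b) = \<bar>a - b\<bar>" if "a \<ge> 0" "b \<ge> 0" for a b
  proof (cases "a = 0 \<or> b = 0")
    case True
    then show ?thesis
    proof
      assume "a = 0"
      then show ?thesis using dist_root[of "mk c b" r] h[OF that(2)] that by (simp add: mk_def)
    next
      assume "b = 0"
      then have "mk c b = Root" by (simp add: mk_def)
      moreover have "tree_dist r p Root = tree_height p" if "tree_height p \<ge> 0" for p
        using that by (cases p) (auto simp: tree_dist_def)
      ultimately show ?thesis using h[OF that(1)] that \<open>b = 0\<close> by simp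
    qed
  next
    case False
    then have ap: "a > 0" "b > 0" using that by auto
    obtain n where n: "mk c a = Pt n (c n) (real n + 1 - a)" "real n < a" "a \<le> real n + 1"
      using mk_pos[OF ap(1)] by blast
    obtain m where m: "mk c b = Pt m (c m) (real m + 1 - b)" "real m < b" "b \<le> real m + 1"
      using mk_pos[OF ap(2)] by blast
    have "real (tree_meet_depth r (mk c a) (mk c b)) = real (min n m) + 1"
      using meet_thr[OF c] n m by simp
    then show ?thesis using n m unfolding tree_dist_def by (simp add: h that; linarith?)
  qed
  have "mk c \<in> {0..} \<rightarrow>\<^sub>E tree_points S"
  proof -
    have ext: "\<forall>x. x \<notin> {0..} \<longrightarrow> mk c x = undefined" by (simp add: mk_def)
    show ?thesis using pts ext by (auto simp: PiE_def extensional_def Pi_def)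
  qed
  moreover have "mk c 0 = Root" by (simp add: mk_def)
  ultimately show ?thesis using d by (simp add: geodesic_branches_def)
qed

lemma pt_of_height:
  assumes "p \<in> tree_points S" "tree_height p = a" "a > 0"
  shows "\<exists>n y. p = Pt n y (real n + 1 - a) \<and> y \<in> S n \<and> real n < a \<and> a \<le> real n + 1"
  using assms by (auto simp: tree_points_def)

lemma branch_props:
  assumes F: "F \<in> geodesic_branches S r"
  shows "tb F \<in> ThrT S r" "mk (tb F) = F"
proof -
  have F0: "F 0 = Root" and Fp: "\<And>a. a \<ge> 0 \<Longrightarrow> F a \<in> tree_points S"
    and Fu: "\<And>a. a < 0 \<Longrightarrow> F a = undefined"
    and Fd: "\<And>a b. a \<ge> 0 \<Longrightarrow> b \<ge> 0 \<Longrightarrow> tree_dist r (F a) (F b) = \<bar>a - b\<bar>"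
    using F by (auto simp: geodesic_branches_def PiE_def extensional_def)
  have h: "tree_height (F a) = a" if "a \<ge> 0" for a
    using Fd[OF order_refl that] F0 dist_root[OF height_nonneg[OF Fp[OF that]], of r] that by simp
  have P: "\<exists>n y. F a = Pt n y (real n + 1 - a) \<and> y \<in> S n \<and> real n < a \<and> a \<le> real n + 1"
    if "a > 0" for a
    using pt_of_height[OF Fp h] that by auto
  have I: "F (real n + 1) = Pt n (tb F n) 0 \<and> tb F n \<in> S n" for n
  proof -
    obtain m y where my: "F (real n + 1) = Pt m y (real m + 1 - (real n + 1))" "y \<in> S m"
      "real m < real n + 1" "real n + 1 \<le> real m + 1"
      using P[of "real n + 1"] by auto
    then have "m = n" by linarith
    show ?thesis using my by (simp add: \<open>m = n\<close> tb_def)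
  qed
  show "tb F \<in> ThrT S r"
    unfolding ThrT_def
  proof (intro CollectI allI conjI)
    fix n
    show "tb F n \<in> S n" using I by blast
    have e2: "F (real (Suc n) + 1) = Pt (Suc n) (tb F (Suc n)) 0" using I by blast
    have "tree_dist r (F (real n + 1)) (F (real (Suc n) + 1)) = 1" using Fd[of "real n + 1" "real (Suc n) + 1"] by simp
    then have "real (tree_meet_depth r (Pt n (tb F n) 0) (Pt (Suc n) (tb F (Suc n)) 0)) > real n"
      unfolding I[THEN conjunct1] e2 tree_dist_def by (simp; linarith?)
    then have "anc r (Suc n) n (tb F (Suc n)) = tb F n" by (rule meet_anc[rotated]) simp
    then show "r n (tb F (Suc n)) = tb F n" by (metis anc_suc)
  qed
  show "mk (tb F) = F"
  proof
    fix a :: real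
    consider "a < 0" | "a = 0" | "a > 0" by linarith
    then show "mk (tb F) a = F a"
    proof cases
      case 1 then show ?thesis using Fu by (simp add: mk_def)
    next
      case 2 then show ?thesis using F0 by (simp add: mk_def)
    next
      case 3
      obtain n y where ny: "F a = Pt n y (real n + 1 - a)" "real n < a" "a \<le> real n + 1"
        using P[OF 3] by blast
      have "tree_dist r (F a) (F (real n + 1)) = real n + 1 - a" using Fd[of a "real n + 1"] 3 ny by simp
      then have "real (tree_meet_depth r (Pt n y (real n + 1 - a)) (Pt n (tb F n) 0)) > real n"
        unfolding I[THEN conjunct1] ny(1) tree_dist_def using ny by (simp; linarith?)
      then have "anc r n n (tb F n) = y" by (rule meet_anc[rotated]) simp
      then have y: "y = tb F n" by (simp add: anc_self)
      obtain m where m: "mk (tb F) a = Pt m (tb F m) (real m + 1 - a)" "real m < a" "a \<le> real m + 1"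
        using mk_pos[OF 3] by blast
      have "m = n" using m ny by linarith
      show ?thesis using m ny y by (simp add: \<open>m = n\<close>)
    qed
  qed
qed

lemma tb_mk: "tb (mk c) = c"
proof
  fix n
  obtain m where m: "mk c (real n + 1) = Pt m (c m) (real m + 1 - (real n + 1))" "real m < real n + 1" "real n + 1 \<le> real m + 1"
    using mk_pos[of "real n + 1" c] by auto
  then have "m = n" by linarith
  show "tb (mk c) n = c n" using m by (simp add: \<open>m = n\<close> tb_def)
qed

lemma thr_branch_bij: "bij_betw mk (ThrT S r) (geodesic_branches S r)"
  by (rule bij_betw_byWitness[where f' = tb])
     (auto simp: tb_mk branch_props mk_branch)

theorem proposition9p2:
  fixes X :: "'a::metric_space set"
    and Y0 :: "(nat \<Rightarrow> real) set"
    and Y :: "nat \<Rightarrow> (nat \<Rightarrow> real) set"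
  assumes "compact X"
    and "Y0 \<subseteq> hilbert_cube_set" and "compactin hilbert_cube Y0"
    and "\<And>k. Y k \<subseteq> hilbert_cube_set"
    and "\<And>k. compactin hilbert_cube (Y k)"
    and "\<And>k. prism (subtopology hilbert_cube (Y k))"
    and "\<And>k. Y0 \<subseteq> hilbert_cube interior_of (Y k)"
    and "\<And>k. Y (Suc k) \<subseteq> Y k"
    and "(\<Inter>k. Y k) = Y0"
  shows "\<exists>\<Phi>. bij_betw \<Phi>
      ({f. approximative_map (top_of_set X) Y f}
         // {(f, g). approximative_map (top_of_set X) Y f \<and> approximative_map (top_of_set X) Y g
                     \<and> approx_homotopic (top_of_set X) Y0 f g})
      (geodesic_branches (\<lambda>k. hclasses (top_of_set X) (subtopology hilbert_cube (Y k)))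
                         (induced_incl (top_of_set X) Y))"
proof -
  let ?TX = "top_of_set X"
  let ?A = "{f. approximative_map ?TX Y f}"
  let ?R = "{(f, g). approximative_map ?TX Y f \<and> approximative_map ?TX Y g
                     \<and> approx_homotopic ?TX Y0 f g}"
  define \<Phi>1 where "\<Phi>1 C = theta ?TX Y (SOME f. f \<in> C)" for C
  have dec: "\<And>k. Y (Suc k) \<subseteq> Y k" by fact
  have cls: "?R `` {f} = {g. approximative_map ?TX Y g \<and> theta ?TX Y g = theta ?TX Y f}"
    if "approximative_map ?TX Y f" for f
    using theta_iff[OF assms(8) assms(5) assms(4) assms(7) assms(9) that] that by auto
  have phi: "\<Phi>1 (?R `` {f}) = theta ?TX Y f" if f: "approximative_map ?TX Y f" for f
  proof -
    have "f \<in> ?R `` {f}" using cls[OF f] f by simp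
    then have "(SOME g. g \<in> ?R `` {f}) \<in> ?R `` {f}" by (rule someI[where P="\<lambda>g. g \<in> ?R `` {f}"])
    then have "theta ?TX Y (SOME g. g \<in> ?R `` {f}) = theta ?TX Y f"
      unfolding cls[OF f] by simp
    then show ?thesis unfolding \<Phi>1_def .
  qed
  have b1: "bij_betw \<Phi>1 (?A // ?R) (Thr ?TX Y)"
    unfolding bij_betw_def
  proof
    show "inj_on \<Phi>1 (?A // ?R)"
    proof (rule inj_onI)
      fix C1 C2 assume c1: "C1 \<in> ?A // ?R" and c2: "C2 \<in> ?A // ?R" and e: "\<Phi>1 C1 = \<Phi>1 C2"
      obtain f1 where f1: "approximative_map ?TX Y f1" "C1 = ?R `` {f1}" using c1 by (auto simp: quotient_def)
      obtain f2 where f2: "approximative_map ?TX Y f2" "C2 = ?R `` {f2}" using c2 by (auto simp: quotient_def)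
      have "theta ?TX Y f1 = theta ?TX Y f2" using e phi f1 f2 by simp
      then show "C1 = C2" using cls f1 f2 by simp
    qed
    show "\<Phi>1 ` (?A // ?R) = Thr ?TX Y"
    proof
      show "\<Phi>1 ` (?A // ?R) \<subseteq> Thr ?TX Y"
        using phi theta_thr[where Y=Y, OF dec] by (auto simp: quotient_def)
      show "Thr ?TX Y \<subseteq> \<Phi>1 ` (?A // ?R)"
      proof
        fix c assume "c \<in> Thr ?TX Y"
        then obtain f where f: "approximative_map ?TX Y f" "theta ?TX Y f = c"
          using thr_surj[where Y=Y, OF dec] by blast
        then have "?R `` {f} \<in> ?A // ?R" by (auto simp: quotient_def)
        then show "c \<in> \<Phi>1 ` (?A // ?R)" using phi[OF f(1)] f(2) by force
      qed
    qed
  qed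
  have e: "Thr ?TX Y = ThrT (\<lambda>k. hclasses ?TX (subtopology hilbert_cube (Y k))) (induced_incl ?TX Y)"
    by (simp add: Thr_def ThrT_def)
  have "bij_betw (mk \<circ> \<Phi>1) (?A // ?R)
      (geodesic_branches (\<lambda>k. hclasses ?TX (subtopology hilbert_cube (Y k))) (induced_incl ?TX Y))"
    by (rule bij_betw_trans[OF b1]) (simp only: e thr_branch_bij)
  then show ?thesis by blast
qed


end
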